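(* Let $n_1,n_2,m_1,m_2$ be integers with $n_i\ge2$ and $0\le m_i\le n_i(n_i-1)$ for $i\in\{1,2\}$, and let $q_i$ and $r_i$ be the quotient and remainder of $m_i$ divided by $n_i$. If $n_1\le n_2$, $q_1\le q_2$ and $n_1-r_1\ge n_2-r_2$, then $\mathbb G(n_1,m_1)$ is a subgraph of $\mathbb G(n_2,m_2)$ (with vertex set $\{1,\dots,n_1\}\subseteq\{1,\dots,n_2\}$ and every arc of $\mathbb G(n_1,m_1)$ an arc of $\mathbb G(n_2,m_2)$).
   Context: For integers $n\ge2$ and $0\le m\le n(n-1)$, $\mathbb G(n,m)$ is the simple directed graph on vertex set $\{1,\dots,n\}$ whose arc set is $\{(\lceil \frac{i}{n-1}\rceil,\ n-((i-1)\bmod n)) : i=1,\dots,m\}$, where an arc $(j,k)$ goes from $j$ to $k$ and $a\bmod b\in\{0,\dots,b-1\}$; these $m$ pairs are pairwise distinct pairs of distinct vertices. *)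

theory Defs
  imports Complex_Main
begin

definition G_verts :: "nat \<Rightarrow> nat set" where
  "G_verts n = {1..n}"

definition G_arcs :: "nat \<Rightarrow> nat \<Rightarrow> (nat \<times> nat) set" where
  "G_arcs n m = {(nat \<lceil>real i / real (n - 1)\<rceil>, n - ((i - 1) mod n)) | i. i \<in> {1..m}}"

end

theory Submission
  imports Defs
begin
definition idx :: "nat \<Rightarrow> nat \<Rightarrow> nat \<Rightarrow> nat" where
  "idx n j t = (if j < t then (j-1)*n + (n-t) else (j-2)*n + (n-t))"

lemma ceil_lem:
  assumes "d > 0"
  shows "nat \<lceil>real (Suc k) / real d\<rceil> = k div d + 1"
proof -
  have a: "d * (k div d) \<le> k" using div_mult_mod_eq[of k d] by (metis le_add1 mult.commute)
  have b: "k < d * (k div d) + d"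
    by (metis assms add.commute div_mult_mod_eq mod_less_divisor nat_add_left_cancel_less mult.commute)
  have "\<lceil>real (Suc k) / real d\<rceil> = int (k div d + 1)"
  proof (rule ceiling_unique)
    have "real d * real (k div d) < real (Suc k)" using a by (metis of_nat_less_iff of_nat_mult less_Suc_eq_le)
    then show "real_of_int (int (k div d + 1)) - 1 < real (Suc k) / real d"
      using assms by (simp add: field_simps)
    have "real (Suc k) \<le> real d * real (k div d) + real d" using b
      by (metis Suc_leI of_nat_add of_nat_le_iff of_nat_mult)
    then show "real (Suc k) / real d \<le> real_of_int (int (k div d + 1))"
      using assms by (simp add: field_simps)
  qed
  then show ?thesis by simp
qed

lemma lin_lem:
  fixes x y a r n :: nat
  assumes "a < n" "r < n"
  shows "x*n + a < y*n + r \<longleftrightarrow> x < y \<or> (x = y \<and> a < r)"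
proof
  assume h: "x*n + a < y*n + r"
  show "x < y \<or> (x = y \<and> a < r)"
  proof (rule ccontr)
    assume "\<not> ?thesis"
    then have "y < x \<or> (x = y \<and> r \<le> a)" by auto
    then show False
    proof
      assume "y < x"
      then have "Suc y \<le> x" by simp
      then have "Suc y * n \<le> x * n" by (rule mult_le_mono1)
      then show False using h assms by simp
    qed (use h in simp)
  qed
next
  assume "x < y \<or> (x = y \<and> a < r)"
  then show "x*n + a < y*n + r"
  proof
    assume "x < y"
    then have "Suc x \<le> y" by simp
    then have "Suc x * n \<le> y * n" by (rule mult_le_mono1)
    then show ?thesis using assms by simp
  qed simp
qed

lemma fwd:
  assumes "n \<ge> 2" "1 \<le> j" "j \<le> n" "1 \<le> t" "t \<le> n" "t \<noteq> j"
  shows "idx n j t div (n-1) + 1 = j \<and> n - idx n j t mod n = t"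
proof -
  obtain d where d: "n = Suc d" "d \<ge> 1" using assms(1) by (cases n) auto
  obtain p where p: "j = Suc p" using assms(2) by (cases j) auto
  have modl: "\<And>x. (x*n + (n-t)) mod n = n - t"
  proof -
    fix x
    have "n - t < n" using assms by simp
    then show "(x*n + (n-t)) mod n = n - t" by (metis mod_less mod_mult_self3)
  qed
  have "\<exists>x. idx n j t = x*n + (n-t)" unfolding idx_def by auto
  then have m: "idx n j t mod n = n - t" using modl by auto
  have dv: "idx n j t div (n-1) = p"
  proof (cases "j < t")
    case True
    have "idx n j t = p*n + (n-t)" unfolding idx_def using True p by simp
    moreover have "d*p \<le> p*n + (n-t)" using d by simp
    moreover have "p*n + (n-t) < d * Suc p" using d True p assms by (simp add: algebra_simps)
    ultimately show ?thesis using d div_nat_eqI by simp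
  next
    case False
    then have tj: "t < j" using assms by simp
    then obtain p' where p': "p = Suc p'" using p assms by (cases p) auto
    have "idx n j t = p'*n + (n-t)" unfolding idx_def using False p p' by simp
    moreover have "d*p \<le> p'*n + (n-t)" using d p' tj p by (simp add: algebra_simps)
    moreover have "p'*n + (n-t) < d * Suc p" using d p' p assms tj by (simp add: algebra_simps)
    ultimately show ?thesis using d div_nat_eqI by simp
  qed
  show ?thesis using m dv p assms by simp
qed

lemma conv:
  assumes "n \<ge> 2" "k < n*(n-1)"
  shows "1 \<le> k div (n-1) + 1 \<and> k div (n-1) + 1 \<le> n \<and> 1 \<le> n - k mod n \<and> n - k mod n \<le> n
     \<and> n - k mod n \<noteq> k div (n-1) + 1 \<and> k = idx n (k div (n-1) + 1) (n - k mod n)"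
proof -
  obtain d where d: "n = Suc d" "d \<ge> 1" using assms(1) by (cases n) auto
  define p where "p = k div d"
  define s where "s = k mod d"
  have k: "k = p*d + s" unfolding p_def s_def by simp
  have sd: "s < d" unfolding s_def using d by simp
  have pn: "p < n"
  proof (rule ccontr)
    assume "\<not> p < n"
    then have "n*d \<le> p*d" by (simp add: mult_le_mono1)
    then show False using assms(2) k d by simp
  qed
  have pd: "p*n = p*d + p" using d by simp
  have kd: "k div (n-1) = p" using p_def d by simp
  show ?thesis
  proof (cases "p \<le> s")
    case True
    have k2: "k = p*n + (s-p)" using k pd True by simp
    have "k mod n = s - p" using k2 sd d by (metis less_imp_diff_less less_SucI mod_less mod_mult_self3)
    then have t: "n - k mod n = Suc d - s + p" using d True sd by simp
    have "idx n (Suc p) (Suc d - s + p) = p*n + (s-p)" unfolding idx_def using True sd d by auto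
    then have ke: "k = idx n (p+1) (n - k mod n)" unfolding t using k2 d by simp
    show ?thesis unfolding kd t using ke[unfolded t] d sd True pn by (simp, linarith)
  next
    case False
    obtain p' where p': "p = Suc p'" using False by (cases p) auto
    have k2: "k = p'*n + (n + s - p)" using k pd False p' d pn by simp
    have "n + s - p < n" using False pn by simp
    then have "k mod n = n + s - p" using k2 by (metis mod_less mod_mult_self3)
    then have t: "n - k mod n = p - s" using False pn by simp
    have "idx n (Suc p) (p - s) = p'*n + (n + s - p)" unfolding idx_def using False p' pn by auto
    then have ke: "k = idx n (p+1) (n - k mod n)" unfolding t using k2 d by simp
    show ?thesis unfolding kd t using ke[unfolded t] d sd False pn by (simp, linarith)
  qed
qed


lemma idx_lt:
  assumes "1 \<le> t" "t \<le> n" "n \<ge> 2"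
  shows "idx n j t < m \<longleftrightarrow> (if j < t then j-1 else j-2) < m div n \<or>
     ((if j < t then j-1 else j-2) = m div n \<and> n - t < m mod n)"
proof -
  have i: "idx n j t = (if j < t then j-1 else j-2) * n + (n - t)" unfolding idx_def by simp
  have m: "m = (m div n) * n + m mod n" by simp
  have "idx n j t < m \<longleftrightarrow> (if j < t then j-1 else j-2) * n + (n - t) < (m div n) * n + m mod n"
    using i m by metis
  also have "\<dots> \<longleftrightarrow> (if j < t then j-1 else j-2) < m div n \<or>
     ((if j < t then j-1 else j-2) = m div n \<and> n - t < m mod n)"
    by (rule lin_lem) (use assms in auto)
  finally show ?thesis .
qed

lemma mono_idx:
  assumes "n1 \<ge> 2" "n1 \<le> n2" "m1 div n1 \<le> m2 div n2"
    "int n1 - int (m1 mod n1) \<ge> int n2 - int (m2 mod n2)"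
    "1 \<le> t" "t \<le> n1" "idx n1 j t < m1"
  shows "idx n2 j t < m2"
proof -
  define x where "x = (if j < t then j-1 else j-2)"
  have h1: "x < m1 div n1 \<or> (x = m1 div n1 \<and> n1 - t < m1 mod n1)"
    using idx_lt[of t n1 j m1] assms unfolding x_def by simp
  have "x < m2 div n2 \<or> (x = m2 div n2 \<and> n2 - t < m2 mod n2)"
  proof (cases "x < m1 div n1")
    case True then show ?thesis using assms(3) by simp
  next
    case False
    then have "x = m1 div n1" "n1 - t < m1 mod n1" using h1 by auto
    then show ?thesis using assms by (cases "m1 div n1 < m2 div n2") auto
  qed
  then show ?thesis using idx_lt[of t n2 j m2] assms unfolding x_def by simp
qed

theorem corollary2:
  fixes n1 n2 m1 m2 :: nat
  assumes "n1 \<ge> 2" and "n2 \<ge> 2"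
    and "m1 \<le> n1 * (n1 - 1)" and "m2 \<le> n2 * (n2 - 1)"
    and "n1 \<le> n2"
    and "m1 div n1 \<le> m2 div n2"
    and "int n1 - int (m1 mod n1) \<ge> int n2 - int (m2 mod n2)"
  shows "G_verts n1 \<subseteq> G_verts n2 \<and> G_arcs n1 m1 \<subseteq> G_arcs n2 m2"
proof
  show "G_verts n1 \<subseteq> G_verts n2" unfolding G_verts_def using assms by auto
  show "G_arcs n1 m1 \<subseteq> G_arcs n2 m2"
  proof
    fix e assume "e \<in> G_arcs n1 m1"
    then obtain i where i: "i \<in> {1..m1}" "e = (nat \<lceil>real i / real (n1 - 1)\<rceil>, n1 - ((i - 1) mod n1))"
      unfolding G_arcs_def by auto
    obtain k where k: "i = Suc k" using i by (cases i) auto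
    have a: "nat \<lceil>real i / real (n1 - 1)\<rceil> = k div (n1-1) + 1"
      unfolding k by (rule ceil_lem) (use assms in simp)
    define j where "j = k div (n1-1) + 1"
    define t where "t = n1 - k mod n1"
    have e: "e = (j, t)" using i a k unfolding j_def t_def by simp
    have kl: "k < n1 * (n1 - 1)" using i k assms by simp
    have c: "1 \<le> j \<and> j \<le> n1 \<and> 1 \<le> t \<and> t \<le> n1 \<and> t \<noteq> j \<and> k = idx n1 j t"
      using conv[OF assms(1) kl] unfolding j_def t_def by blast
    have "idx n1 j t < m1" using c i k by simp
    then have l2: "idx n2 j t < m2" using mono_idx[OF assms(1,5,6,7)] c by blast
    have f: "idx n2 j t div (n2-1) + 1 = j \<and> n2 - idx n2 j t mod n2 = t"
      by (rule fwd) (use c assms in auto)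
    have "nat \<lceil>real (Suc (idx n2 j t)) / real (n2 - 1)\<rceil> = j"
      using ceil_lem[of "n2 - 1" "idx n2 j t"] f assms by simp
    then have "e = (nat \<lceil>real (Suc (idx n2 j t)) / real (n2 - 1)\<rceil>, n2 - ((Suc (idx n2 j t) - 1) mod n2))"
      using e f by simp
    moreover have "Suc (idx n2 j t) \<in> {1..m2}" using l2 by simp
    ultimately show "e \<in> G_arcs n2 m2" unfolding G_arcs_def by blast
  qed
qed

end
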